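(* The set $\mathrm{Diag}\,\mathbb P=\{p^{(k)}_k:k\in\mathbb N\}$ is not (R)-dense. Moreover, $\lim_{k\to+\infty}p^{(k+1)}_{k+1}/p^{(k)}_k=+\infty$, and $R^d(\mathrm{Diag}\,\mathbb P)\cap(0,+\infty)=\emptyset$.
   Context: Let $p_n$ denote the $n$-th prime number. Define $p^{(0)}_n=n$ and recursively $p^{(k+1)}_n=p_{p^{(k)}_n}$ for $k\in\mathbb N_0$. For $A\subset\mathbb N$, its ratio set is $R(A)=\{a/b:a,b\in A\}$; $A$ is (R)-dense if $R(A)$ is dense in $(0,+\infty)$. For $B\subset(0,+\infty)$, $B^d$ denotes the set of accumulation points of $B$, and $R^d(A)=(R(A))^d$. *)

theory Defs
  imports "HOL-Analysis.Analysis" "HOL-Computational_Algebra.Primes"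
begin

text \<open>The n-th prime, 1-indexed: nth_prime 1 = 2, nth_prime 2 = 3, ...
  (The value at 0 is irrelevant for the statement.)\<close>
definition nth_prime :: "nat \<Rightarrow> nat" where
  "nth_prime n = enumerate {p::nat. prime p} (n - 1)"

definition iter_prime :: "nat \<Rightarrow> nat \<Rightarrow> nat" where
  "iter_prime k n = (nth_prime ^^ k) n"

definition diagP :: "nat set" where
  "diagP = {iter_prime k k | k. k \<ge> 1}"

definition ratio_set :: "nat set \<Rightarrow> real set" where
  "ratio_set A = {real a / real b | a b. a \<in> A \<and> b \<in> A}"

definition R_dense :: "nat set \<Rightarrow> bool" where
  "R_dense A \<longleftrightarrow> {0<..} \<subseteq> closure (ratio_set A)"

definition acc_points :: "real set \<Rightarrow> real set" where
  "acc_points B = {x. x islimpt B}"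

end

theory Submission
  imports Defs
begin

lemma binom_bound: "(2*m+1) choose m \<le> (4::nat)^m"
proof -
  have s: "((2*m+1) choose m) = ((2*m+1) choose (m+1))"
    by (metis add_diff_cancel_left' binomial_symmetric le_add2 mult_2 add.assoc add.commute)
  have "((2*m+1) choose m) + ((2*m+1) choose (m+1)) = (\<Sum>k\<in>{m, m+1}. (2*m+1) choose k)" by simp
  also have "\<dots> \<le> (\<Sum>k\<le>2*m+1. (2*m+1) choose k)"
    by (rule sum_mono2) auto
  also have "\<dots> = 2^(2*m+1)" by (rule choose_row_sum)
  finally have "2 * ((2*m+1) choose m) \<le> 2 * 4^m" using s by (simp add: power_mult power_add)
  then show ?thesis by simp
qed

lemma prod_primes_dvd:
  fixes C :: nat
  assumes "finite T" "\<And>p. p \<in> T \<Longrightarrow> prime p \<and> p dvd C"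
  shows "\<Prod>T dvd C"
  using assms
proof (induction T rule: finite_induct)
  case empty then show ?case by simp
next
  case (insert p T)
  have cop: "coprime p (\<Prod>T)"
  proof (rule prod_coprime_right)
    fix q assume q: "q \<in> T"
    then have "p \<noteq> q" using insert.hyps(2) by blast
    moreover have "prime p" "prime q" using insert.prems q by auto
    ultimately show "coprime p q" using primes_coprime by blast
  qed
  show ?case using insert cop by (simp add: divides_mult)
qed

lemma primorial_bound: "\<Prod>{p::nat. prime p \<and> p \<le> n} \<le> 4^n"
proof (induction n rule: less_induct)
  case (less n)
  show ?case
  proof (cases "n \<le> 2")
    case True
    show ?thesis
    proof (cases "n < 2")
      case True
      then have e: "{p::nat. prime p \<and> p \<le> n} = {}" by (auto dest: prime_gt_1_nat)
      show ?thesis unfolding e by simp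
    next
      case False
      with \<open>n \<le> 2\<close> have n2: "n = 2" by simp
      have "{p::nat. prime p \<and> p \<le> 2} = {2}" by (auto dest: prime_gt_1_nat)
      then show ?thesis using n2 by simp
    qed
  next
    case False
    show ?thesis
    proof (cases "even n")
      case True
      have "\<not> prime n" using True False prime_odd_nat by fastforce
      then have e: "{p::nat. prime p \<and> p \<le> n} = {p. prime p \<and> p \<le> n - 1}"
        by (intro Collect_cong) (use \<open>\<not> prime n\<close> in \<open>auto simp: le_diff_conv2 dest: le_neq_implies_less\<close>)
      have b: "(4::nat)^(n-1) \<le> 4^n" by (rule power_increasing) auto
      have a: "\<Prod>{p::nat. prime p \<and> p \<le> n - 1} \<le> 4^(n-1)" using less[of "n-1"] False by simp
      show ?thesis unfolding e using order_trans[OF a b] .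
    next
      case odd: False
      then obtain m where n: "n = 2*m+1" by (metis oddE)
      have m1: "m \<ge> 1" using False n by simp
      define A where "A = {p::nat. prime p \<and> p \<le> m+1}"
      define T where "T = {p::nat. prime p \<and> m+1 < p \<and> p \<le> n}"
      have fA: "finite A" "finite T" unfolding A_def T_def by auto
      have un: "{p::nat. prime p \<and> p \<le> n} = A \<union> T" "A \<inter> T = {}"
        unfolding A_def T_def n by auto
      have "\<Prod>T dvd ((2*m+1) choose m)"
      proof (rule prod_primes_dvd[OF fA(2)])
        fix p assume p: "p \<in> T"
        then have pp: "prime p" "m+1 < p" "p \<le> 2*m+1" unfolding T_def n by auto
        have "p dvd fact (2*m+1)" using pp prime_dvd_fact_iff by blast
        also have "fact (2*m+1) = fact m * fact (m+1) * ((2*m+1) choose m)"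
          using binomial_fact_lemma[of m "2*m+1"] by (simp add: mult_2)
        finally have "p dvd fact m * fact (m+1) * ((2*m+1) choose m)" .
        moreover have "\<not> p dvd fact m"
          by (subst prime_dvd_fact_iff[OF pp(1)]) (use pp in simp)
        moreover have "\<not> p dvd fact (m+1)"
          by (subst prime_dvd_fact_iff[OF pp(1)]) (use pp in simp)
        ultimately show "prime p \<and> p dvd ((2*m+1) choose m)"
          using pp(1) by (simp add: prime_dvd_mult_iff)
      qed
      then have "\<Prod>T \<le> (2*m+1) choose m"
        by (rule dvd_imp_le) (simp)
      also have "\<dots> \<le> 4^m" by (rule binom_bound)
      finally have T4: "\<Prod>T \<le> 4^m" .
      have A4: "\<Prod>A \<le> 4^(m+1)" unfolding A_def using less[of "m+1"] n m1 by simp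
      have "\<Prod>{p::nat. prime p \<and> p \<le> n} = \<Prod>A * \<Prod>T"
        using un fA by (simp add: prod.union_disjoint)
      also have "\<dots> \<le> 4^(m+1) * 4^m" using A4 T4 by (rule mult_le_mono)
      also have "\<dots> = 4^n" unfolding n by (simp add: power_add[symmetric])
      finally show ?thesis .
    qed
  qed
qed

lemma pi_bound:
  assumes t: "t \<ge> 1"
  shows "t * card {p::nat. prime p \<and> p \<le> n} \<le> t*4^t + n"
proof -
  define A where "A = {p::nat. prime p \<and> p \<le> n}"
  define A1 where "A1 = {p\<in>A. p \<le> 4^t}"
  define A2 where "A2 = {p\<in>A. 4^t < p}"
  have fA: "finite A" unfolding A_def by (rule finite_subset[of _ "{..n}"]) auto
  have f12: "finite A1" "finite A2" using fA unfolding A1_def A2_def by auto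
  have un: "A = A1 \<union> A2" "A1 \<inter> A2 = {}" unfolding A1_def A2_def by auto
  have cA: "card A = card A1 + card A2" using un f12 by (simp add: card_Un_disjoint)
  have "A1 \<subseteq> {1..4^t}" unfolding A1_def A_def by (auto dest: prime_gt_0_nat)
  then have c1: "card A1 \<le> 4^t" using card_mono[of "{1..4^t}" A1] by simp
  have "(4^t)^card A2 = (\<Prod>p\<in>A2. (4::nat)^t)" by simp
  also have "\<dots> \<le> \<Prod>A2" by (rule prod_mono) (auto simp: A2_def)
  also have "\<dots> \<le> \<Prod>A1 * \<Prod>A2"
  proof -
    have "\<Prod>A1 \<ge> 1" unfolding A1_def A_def by (intro prod_ge_1) (auto dest: prime_gt_0_nat)
    then show ?thesis by simp
  qed
  also have "\<dots> = \<Prod>A" using un f12 by (simp add: prod.union_disjoint)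
  also have "\<dots> \<le> 4^n" unfolding A_def by (rule primorial_bound)
  finally have "(4::nat)^(t * card A2) \<le> 4^n" by (simp add: power_mult)
  then have "t * card A2 \<le> n" by simp
  then show ?thesis using c1 cA t unfolding A_def[symmetric]
    by (simp add: add_mult_distrib2 add_mono)
qed

lemma enum_ge: "enumerate {p::nat. prime p} i \<ge> i + 2"
proof (induction i)
  case 0
  have "prime (enumerate {p::nat. prime p} 0)" using enumerate_in_set[OF primes_infinite] by simp
  then have "2 \<le> enumerate {p::nat. prime p} 0" by (rule prime_ge_2_nat)
  then show ?case by simp
next
  case (Suc i)
  then show ?case using enumerate_step[OF primes_infinite, of i] by simp
qed

lemma np_ge: "nth_prime n \<ge> n + 1"
  unfolding nth_prime_def using enum_ge[of "n-1"] by simp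

lemma np_mono: "mono nth_prime"
  unfolding mono_def nth_prime_def
  using primes_infinite by (simp add: diff_le_mono)

lemma card_np: assumes "N \<ge> 1" shows "N \<le> card {p::nat. prime p \<and> p \<le> nth_prime N}"
proof -
  let ?E = "enumerate {p::nat. prime p}"
  have inj: "inj_on ?E {..<N}" using inj_enumerate[OF primes_infinite] by (simp add: inj_on_def inj_def)
  have sub: "?E ` {..<N} \<subseteq> {p::nat. prime p \<and> p \<le> nth_prime N}"
  proof
    fix x assume "x \<in> ?E ` {..<N}"
    then obtain i where i: "i < N" "x = ?E i" by auto
    have "prime x" using i enumerate_in_set[OF primes_infinite] by simp
    moreover have "x \<le> nth_prime N" unfolding nth_prime_def i(2) using i(1) primes_infinite by simp
    ultimately show "x \<in> {p::nat. prime p \<and> p \<le> nth_prime N}" by simp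
  qed
  have fin: "finite {p::nat. prime p \<and> p \<le> nth_prime N}" by (rule finite_subset[of _ "{..nth_prime N}"]) auto
  have "N = card (?E ` {..<N})" using card_image[OF inj] by simp
  also have "\<dots> \<le> card {p::nat. prime p \<and> p \<le> nth_prime N}" by (rule card_mono[OF fin sub])
  finally show ?thesis .
qed

lemma np_lower: assumes "t \<ge> 1" "N \<ge> 1" shows "t * N \<le> t * 4^t + nth_prime N"
proof -
  have "t * N \<le> t * card {p::nat. prime p \<and> p \<le> nth_prime N}"
    using card_np[OF assms(2)] by simp
  also have "\<dots> \<le> t*4^t + nth_prime N" by (rule pi_bound[OF assms(1)])
  finally show ?thesis .
qed

lemma funpow_np_ge: "(nth_prime ^^ j) n \<ge> n"
proof (induction j)
  case 0 then show ?case by simp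
next
  case (Suc j)
  then show ?case using np_ge[of "(nth_prime ^^ j) n"] by simp
qed

lemma d_ge: "iter_prime k k \<ge> k"
  unfolding iter_prime_def by (rule funpow_np_ge)

lemma d_step: "iter_prime (Suc k) (Suc k) \<ge> nth_prime (iter_prime k k)"
proof -
  have "(nth_prime ^^ k) k \<le> (nth_prime ^^ k) (Suc k)"
    by (rule funpow_mono[OF np_mono]) simp
  then have "nth_prime ((nth_prime ^^ k) k) \<le> nth_prime ((nth_prime ^^ k) (Suc k))"
    using np_mono by (simp add: mono_def)
  then show ?thesis unfolding iter_prime_def by simp
qed

lemma d_smono: "strict_mono (\<lambda>k. iter_prime k k)"
proof (rule strict_mono_Suc_iff[THEN iffD2], intro allI)
  fix k
  show "iter_prime k k < iter_prime (Suc k) (Suc k)"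
    using d_step[of k] np_ge[of "iter_prime k k"] by simp
qed

lemma ratio_big: "\<exists>K::nat. \<forall>k\<ge>K. (Z::real) * real (iter_prime k k) \<le> real (iter_prime (Suc k) (Suc k))"
proof -
  define t where "t = nat \<lceil>2*Z\<rceil> + 1"
  have t1: "t \<ge> 1" unfolding t_def by simp
  have tZ: "2 * Z \<le> real t" unfolding t_def by linarith
  show ?thesis
  proof (intro exI allI impI)
    fix k :: nat assume k: "2*4^t + 1 \<le> k"
    define N where "N = iter_prime k k"
    have N: "N \<ge> 2*4^t + 1" using d_ge[of k] k unfolding N_def by simp
    have "t * N \<le> t * 4^t + nth_prime N" using np_lower[OF t1, of N] N by simp
    moreover have "2 * (t * 4^t) \<le> t * N" using N by simp
    ultimately have "t * N \<le> 2 * nth_prime N" by linarith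
    then have "real t * real N \<le> 2 * real (nth_prime N)" by (metis of_nat_mult of_nat_le_iff of_nat_numeral)
    moreover have "2 * Z * real N \<le> real t * real N" using tZ by (simp add: mult_right_mono)
    moreover have "nth_prime N \<le> iter_prime (Suc k) (Suc k)" using d_step[of k] unfolding N_def .
    ultimately show "Z * real (iter_prime k k) \<le> real (iter_prime (Suc k) (Suc k))"
      unfolding N_def[symmetric] by linarith
  qed
qed

lemma d_pos: "k \<ge> 1 \<Longrightarrow> real (iter_prime k k) > 0"
  using d_ge[of k] by simp

lemma part2: "filterlim (\<lambda>k. real (iter_prime (k+1) (k+1)) / real (iter_prime k k)) at_top sequentially"
proof (subst filterlim_at_top, intro allI)
  fix Z :: real
  obtain K where K: "\<forall>k\<ge>K. Z * real (iter_prime k k) \<le> real (iter_prime (Suc k) (Suc k))"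
    using ratio_big by blast
  show "eventually (\<lambda>k. Z \<le> real (iter_prime (k+1) (k+1)) / real (iter_prime k k)) sequentially"
    unfolding eventually_sequentially
  proof (intro exI allI impI)
    fix k assume "max K 1 \<le> k"
    then show "Z \<le> real (iter_prime (k+1) (k+1)) / real (iter_prime k k)"
      using K d_pos[of k] by (simp add: pos_le_divide_eq)
  qed
qed

lemma part3: "acc_points (ratio_set diagP) \<inter> {0<..} = {}"
proof (rule ccontr)
  assume "acc_points (ratio_set diagP) \<inter> {0<..} \<noteq> {}"
  then obtain x where x0: "x > 0" and lim: "x islimpt ratio_set diagP"
    unfolding acc_points_def by auto
  define d where "d = (\<lambda>k. iter_prime k k)"
  define M where "M = max (x+1) (2/x)"
  obtain K0 where K0: "\<forall>k\<ge>K0. M * real (d k) \<le> real (d (Suc k))"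
    using ratio_big unfolding d_def by blast
  define K where "K = max K0 1"
  have KK: "\<forall>k\<ge>K. M * real (d k) \<le> real (d (Suc k))" using K0 unfolding K_def by simp
  have dmono: "i \<le> j \<Longrightarrow> d i \<le> d j" for i j
    using strict_mono_less_eq[OF d_smono, of i j] unfolding d_def by simp
  have dpos: "k \<ge> 1 \<Longrightarrow> real (d k) > 0" for k using d_pos unfolding d_def by simp
  have M1: "M \<ge> x + 1" "M \<ge> 2/x" unfolding M_def by auto
  have Mpos: "M > 0" using M1 x0 by linarith
  define F where "F = insert 1 ((\<lambda>(i,j). real (d i) / real (d j)) ` ({..K} \<times> {..K}))"
  have finF: "finite F" unfolding F_def by simp
  have sub: "r \<in> F" if r: "r \<in> ratio_set diagP" "x/2 < r" "r < x+1" for r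
  proof -
    obtain i j where ij: "i \<ge> 1" "j \<ge> 1" "r = real (d i) / real (d j)"
      using r(1) unfolding ratio_set_def diagP_def d_def by auto
    have di: "real (d i) > 0" "real (d j) > 0" using dpos ij by auto
    consider "i \<le> K \<and> j \<le> K" | "i = j" | "j < i \<and> K < i" | "i < j \<and> K < j" by linarith
    then show ?thesis
    proof cases
      case 1 then show ?thesis unfolding F_def using ij(3) by force
    next
      case 2 then show ?thesis unfolding F_def using ij(3) di by simp
    next
      case 3
      have "M * real (d (i-1)) \<le> real (d (Suc (i-1)))" using KK[rule_format, of "i-1"] 3 by linarith
      moreover have "Suc (i-1) = i" using 3 by linarith
      ultimately have "M * real (d (i-1)) \<le> real (d i)" by simp
      moreover have "j \<le> i - 1" using 3 by linarith
      then have "real (d j) \<le> real (d (i-1))" using dmono[of j "i-1"] by simp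
      ultimately have "M * real (d j) \<le> real (d i)" using Mpos
        by (meson mult_left_mono order_trans less_imp_le)
      then have "M \<le> r" using ij(3) di by (simp add: pos_le_divide_eq)
      then show ?thesis using M1 r by linarith
    next
      case 4
      have "M * real (d (j-1)) \<le> real (d (Suc (j-1)))" using KK[rule_format, of "j-1"] 4 by linarith
      moreover have "Suc (j-1) = j" using 4 by linarith
      ultimately have "M * real (d (j-1)) \<le> real (d j)" by simp
      moreover have "i \<le> j - 1" using 4 by linarith
      then have "real (d i) \<le> real (d (j-1))" using dmono[of i "j-1"] by simp
      ultimately have le: "M * real (d i) \<le> real (d j)" using Mpos
        by (meson mult_left_mono order_trans less_imp_le)
      have "r * M \<le> 1" unfolding ij(3) using le di by (simp add: divide_le_eq mult.commute)
      moreover have "2/x * r \<le> M * r" using M1 r x0 by (intro mult_right_mono) auto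
      ultimately have "2/x * r \<le> 1" by (simp add: mult.commute)
      then have "2 * r \<le> x" using x0 by (simp add: field_simps)
      then show ?thesis using r by linarith
    qed
  qed
  have "x islimpt F"
    unfolding islimpt_approachable
  proof (intro allI impI)
    fix e :: real assume e: "e > 0"
    obtain y where y: "y \<in> ratio_set diagP" "y \<noteq> x" "dist y x < min e (min (x/2) 1)"
      using lim unfolding islimpt_approachable using e x0
      by (metis min_less_iff_conj half_gt_zero zero_less_one)
    have "\<bar>y - x\<bar> < x/2" "\<bar>y - x\<bar> < 1" using y(3) by (auto simp: dist_real_def)
    then have "x/2 < y" "y < x + 1" by linarith+
    then have "y \<in> F" using sub y(1) by blast
    then show "\<exists>x'\<in>F. x' \<noteq> x \<and> dist x' x < e" using y by auto
  qed
  then show False using islimpt_finite[OF finF] by blast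
qed

lemma part1: "\<not> R_dense diagP"
proof
  assume "R_dense diagP"
  then have cl: "{0<..} \<subseteq> closure (ratio_set diagP)" unfolding R_dense_def .
  have RQ: "ratio_set diagP \<subseteq> \<rat>" unfolding ratio_set_def by auto
  have "{0<..1::real} \<subseteq> \<rat>"
  proof
    fix x :: real assume x: "x \<in> {0<..1}"
    then have "x \<in> closure (ratio_set diagP)" using cl by auto
    moreover have "\<not> x islimpt ratio_set diagP" using part3 x unfolding acc_points_def by auto
    ultimately have "x \<in> ratio_set diagP" unfolding closure_def by auto
    then show "x \<in> \<rat>" using RQ by auto
  qed
  then have "countable {0<..1::real}" using countable_rat countable_subset by blast
  then show False using uncountable_half_open_interval_2[of "0::real" 1] by simp
qed

theorem theorem12:
  shows "\<not> R_dense diagP \<and>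
    filterlim (\<lambda>k. real (iter_prime (k+1) (k+1)) / real (iter_prime k k)) at_top sequentially \<and>
    acc_points (ratio_set diagP) \<inter> {0<..} = {}"
  using part1 part2 part3 by blast

end
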